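(* For every integer $k\ge 6$, there exist aperiodic recurrent infinite words avoiding $(k,k-5)$-anti-powers.
   Context: A word avoids a class of words if no factor (contiguous subword) belongs to the class. A $(k,\lambda)$-anti-power is a word $w=w_1\cdots w_k$ with $|w_1|=\cdots=|w_k|\ge1$ such that $|\{i: w_i=w_j\}|\le\lambda$ for each $j\in\{1,\dots,k\}$. An infinite word is recurrent if every finite factor occurs infinitely often. An infinite word $x$ is eventually periodic if some suffix of $x$ equals $u^\omega$ for a finite word $u$; otherwise it is aperiodic. *)

theory Defs
  imports Main
begin

definition factor_at :: "(nat \<Rightarrow> 'a) \<Rightarrow> nat \<Rightarrow> nat \<Rightarrow> 'a list" where
  "factor_at x i n = map x [i..<i+n]"

definition is_factor :: "'a list \<Rightarrow> (nat \<Rightarrow> 'a) \<Rightarrow> bool" where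
  "is_factor w x \<longleftrightarrow> (\<exists>i. factor_at x i (length w) = w)"

definition anti_power :: "nat \<Rightarrow> nat \<Rightarrow> 'a list \<Rightarrow> bool" where
  "anti_power k lam w \<longleftrightarrow>
     (\<exists>ws :: 'a list list. length ws = k \<and> concat ws = w \<and>
        (\<exists>m\<ge>1. \<forall>b\<in>set ws. length b = m) \<and>
        (\<forall>j<k. card {i. i < k \<and> ws ! i = ws ! j} \<le> lam))"

definition avoids_anti_powers :: "nat \<Rightarrow> nat \<Rightarrow> (nat \<Rightarrow> 'a) \<Rightarrow> bool" where
  "avoids_anti_powers k lam x \<longleftrightarrow> (\<forall>w. is_factor w x \<longrightarrow> \<not> anti_power k lam w)"

definition recurrent :: "(nat \<Rightarrow> 'a) \<Rightarrow> bool" where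
  "recurrent x \<longleftrightarrow>
     (\<forall>w. is_factor w x \<longrightarrow> infinite {j. factor_at x j (length w) = w})"

definition eventually_periodic :: "(nat \<Rightarrow> 'a) \<Rightarrow> bool" where
  "eventually_periodic x \<longleftrightarrow>
     (\<exists>N u. u \<noteq> [] \<and> (\<forall>n. x (N + n) = u ! (n mod length u)))"

definition aperiodic :: "(nat \<Rightarrow> 'a) \<Rightarrow> bool" where
  "aperiodic x \<longleftrightarrow> \<not> eventually_periodic x"

end

theory Submission
  imports Defs
begin


definition inS :: "nat \<Rightarrow> nat \<Rightarrow> bool" where
  "inS B n \<longleftrightarrow> (\<forall>s. n div B ^ s mod B \<le> 1)"

lemma inS_unfold: "inS B n \<longleftrightarrow> n mod B \<le> 1 \<and> inS B (n div B)"
proof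
  assume h: "inS B n"
  have "n mod B \<le> 1" using h[unfolded inS_def, rule_format, of 0] by simp
  moreover have "inS B (n div B)" unfolding inS_def
  proof
    fix s show "n div B div B ^ s mod B \<le> 1"
      using h[unfolded inS_def, rule_format, of "Suc s"] by (simp add: div_mult2_eq)
  qed
  ultimately show "n mod B \<le> 1 \<and> inS B (n div B)" by simp
next
  assume h: "n mod B \<le> 1 \<and> inS B (n div B)"
  show "inS B n" unfolding inS_def
  proof
    fix s show "n div B ^ s mod B \<le> 1"
    proof (cases s)
      case 0 then show ?thesis using h by simp
    next
      case (Suc s') then show ?thesis using h[THEN conjunct2, unfolded inS_def, rule_format, of s']
        by (simp add: div_mult2_eq)
    qed
  qed
qed

lemma inS_0: "inS B 0" unfolding inS_def by simp

lemma inS_div: "inS B n \<Longrightarrow> inS B (n div B ^ t)"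
  unfolding inS_def by (metis div_mult2_eq power_add)

lemma inS_mod: assumes "B \<ge> 2" "inS B n" shows "n mod B ^ (Suc e) < 2 * B ^ e"
  using assms(2)
proof (induction e arbitrary: n)
  case 0
  then have "n mod B \<le> 1" using inS_unfold[of B n] by blast
  then show ?case by simp
next
  case (Suc e)
  have a: "n mod B \<le> 1" and b: "inS B (n div B)" using Suc.prems inS_unfold[of B n] by blast+
  have c: "n div B mod B ^ Suc e < 2 * B ^ e" using Suc.IH[OF b] .
  have "n mod B ^ Suc (Suc e) = B * (n div B mod B ^ Suc e) + n mod B"
    by (metis mod_mult2_eq power_Suc)
  also have "\<dots> < B * (n div B mod B ^ Suc e) + B" using a assms(1) by simp
  also have "\<dots> = B * (n div B mod B ^ Suc e + 1)" by simp
  also have "\<dots> \<le> B * (2 * B ^ e)" using c by (intro mult_le_mono2) simp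
  also have "\<dots> = 2 * B ^ Suc e" by simp
  finally show ?case .
qed

lemma inS_shift: assumes "B \<ge> 2" "p < B ^ t" shows "inS B (B ^ t + p) \<longleftrightarrow> inS B p"
  using assms(2)
proof (induction t arbitrary: p)
  case 0
  have "inS B 1" using inS_unfold[of B 1] inS_0[of B] assms(1) by simp
  then show ?case using 0 inS_0[of B] by simp
next
  case (Suc t)
  have m: "(B ^ Suc t + p) mod B = p mod B" by simp
  have d: "(B ^ Suc t + p) div B = B ^ t + p div B" using assms(1) by simp
  have "p div B < B ^ t" using Suc.prems assms(1)
    by (simp add: div_less_iff_less_mult mult.commute)
  then show ?case using Suc.IH inS_unfold[of B "B ^ Suc t + p"] inS_unfold[of B p] m d by simp
qed

lemma inS_gap: assumes "B \<ge> 2" "2 * B ^ t \<le> n" "n < B ^ Suc t" shows "\<not> inS B n"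
proof
  assume "inS B n"
  then have "n div B ^ t mod B \<le> 1" unfolding inS_def by blast
  moreover have "n div B ^ t < B" using assms by (simp add: div_less_iff_less_mult mult.commute)
  moreover have "n div B ^ t \<ge> 2" using assms
  proof -
    have "2 * B ^ t div B ^ t \<le> n div B ^ t" using assms(2) div_le_mono by blast
    moreover have "2 * B ^ t div B ^ t = 2" using assms(1) by simp
    ultimately show ?thesis by simp
  qed
  ultimately show False by simp
qed

lemma inS_near: assumes "B \<ge> 2" "inS B a" "inS B b" "a \<le> b" "b + 1 < a + B"
  shows "b = a \<or> b = a + 1"
proof -
  have am: "a mod B \<le> 1" and bm: "b mod B \<le> 1" using assms(2,3) inS_unfold[of B a] inS_unfold[of B b] by blast+
  have ea: "a = B * (a div B) + a mod B" and eb: "b = B * (b div B) + b mod B" by simp_all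
  have "a div B \<le> b div B" using assms(4) div_le_mono by blast
  show ?thesis
  proof (cases "a div B = b div B")
    case True
    then have "B * (a div B) = B * (b div B)" by simp
    then show ?thesis using am bm ea eb assms(4) by linarith
  next
    case False
    then have "a div B + 1 \<le> b div B" using \<open>a div B \<le> b div B\<close> by simp
    then have "B * (a div B + 1) \<le> B * (b div B)" by (rule mult_le_mono2)
    then have "B + B * (a div B) \<le> B * (b div B)" by (simp add: algebra_simps)
    then have "b \<ge> a + B - 1" using ea eb am by linarith
    then show ?thesis using assms(5) by simp
  qed
qed



lemma blocks:
  "\<forall>b\<in>set ws. length b = m \<Longrightarrow> concat ws = map x [i..<i + length ws * m] \<Longrightarrow> j < length ws
   \<Longrightarrow> ws ! j = map x [i+j*m..<i+j*m+m]"
proof (induction ws arbitrary: i j)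
  case Nil
  then show ?case by simp
next
  case (Cons a ws)
  have la: "length a = m" using Cons.prems(1) by simp
  have "[i..<i + length (a # ws) * m] = [i..<i+m] @ [i+m..<i+m+length ws * m]"
    using upt_add_eq_append[of i "i+m" "length ws * m"] by (simp add: algebra_simps)
  then have "a @ concat ws = map x [i..<i+m] @ map x [i+m..<i+m+length ws * m]"
    using Cons.prems(2) by simp
  then have e1: "a = map x [i..<i+m]" and e2: "concat ws = map x [i+m..<i+m+length ws * m]"
    using la by (simp_all add: append_eq_append_conv)
  show ?case
  proof (cases j)
    case 0
    then show ?thesis using e1 by simp
  next
    case (Suc j')
    have "ws ! j' = map x [i+m+j'*m..<i+m+j'*m+m]"
      using Cons.IH[of "i+m" j'] Cons.prems(1,3) e2 Suc by simp
    then show ?thesis using Suc by (simp add: algebra_simps)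
  qed
qed

lemma card_diam:
  assumes "finite A" "\<forall>a\<in>A. \<forall>b\<in>A. a \<le> b \<longrightarrow> b < a + d" shows "card A \<le> (d::nat)"
proof (cases "A = {}")
  case True then show ?thesis by simp
next
  case False
  have "A \<subseteq> {Min A..<Min A + d}"
  proof
    fix b assume "b \<in> A"
    then show "b \<in> {Min A..<Min A + d}" using assms False Min_in[of A] Min_le[of A b] by auto
  qed
  then have "card A \<le> card {Min A..<Min A + d}" by (rule card_mono[rotated]) simp
  then show ?thesis by simp
qed

lemma exists_e: fixes B m :: nat assumes "B \<ge> 2" "m \<ge> 1" shows "\<exists>e. B ^ e \<le> m \<and> m < B ^ Suc e"
proof -
  have "m < 2 ^ m" by (rule less_exp)
  also have "\<dots> \<le> B ^ m" using assms(1) by (rule power_mono) simp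
  also have "\<dots> \<le> B ^ Suc m" using assms(1) by (intro power_increasing) auto
  finally have ex: "m < B ^ Suc m" .
  define e where "e = (LEAST e. m < B ^ Suc e)"
  have 1: "m < B ^ Suc e" unfolding e_def by (rule LeastI[of _ m]) (rule ex)
  have 2: "B ^ e \<le> m"
  proof (cases e)
    case 0 then show ?thesis using assms by simp
  next
    case (Suc e')
    then have "e' < e" by simp
    then have "\<not> m < B ^ Suc e'" unfolding e_def by (rule not_less_Least)
    then show ?thesis using Suc by simp
  qed
  show ?thesis using 1 2 by blast
qed



lemma core:
  assumes k1: "k \<ge> 1" and m1: "m \<ge> 1" and Bdef: "B = 2*k+2"
  shows "card {j. j < k \<and> (\<exists>q<m. inS B (i + j*m + q))} \<le> 4"
proof -
  define D where "D = {j. j < k \<and> (\<exists>q<m. inS B (i + j*m + q))}"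
  have B2: "B \<ge> 2" using Bdef by simp
  have finD: "finite D" unfolding D_def by (rule finite_subset[of _ "{..<k}"]) auto
  have "card D \<le> 4"
  proof (cases "D = {}")
    case True then show ?thesis by simp
  next
    case False
    define P where "P = {n. i \<le> n \<and> n < i + k*m \<and> inS B n}"
    have inP: "i + j*m + q \<in> P" if "j < k" "q < m" "inS B (i + j*m + q)" for j q
    proof -
      have "j * m + m \<le> k * m" using that(1)
        by (metis Suc_leI mult_Suc mult_le_mono1 add.commute)
      then show ?thesis using that unfolding P_def by auto
    qed
    have finP: "finite P" unfolding P_def by (rule finite_subset[of _ "{..<i+k*m}"]) auto
    have neP: "P \<noteq> {}" using False inP unfolding D_def by blast
    define n0 where "n0 = Min P"
    have n0P: "n0 \<in> P" unfolding n0_def using finP neP by (rule Min_in)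
    have n0le: "n0 \<le> n" if "n \<in> P" for n unfolding n0_def using finP that by (rule Min_le)
    obtain e where e1: "B ^ e \<le> m" and e2: "m < B ^ Suc e" using exists_e[OF B2 m1] by blast
    define X where "X = B ^ e"
    define C where "C = B ^ Suc e"
    have CX: "C = B * X" unfolding C_def X_def by simp
    have Cpos: "C > 0" unfolding C_def using B2 by simp
    define h where "h = n0 div C"
    have modP: "n mod C < 2 * X" if "n \<in> P" for n
      using inS_mod[OF B2, of n e] that unfolding P_def C_def X_def by simp
    have divS: "inS B (n div C)" if "n \<in> P" for n
      using inS_div[of B n "Suc e"] that unfolding P_def C_def by simp
    have GA: "n div C = h \<or> n div C = h + 1" if nP: "n \<in> P" for n
    proof -
      have "n < i + k*m" using nP unfolding P_def by simp
      also have "\<dots> \<le> n0 + k * m" using n0P unfolding P_def by simp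
      also have "\<dots> \<le> n0 + k * C" using e2 unfolding C_def by simp
      finally have "n \<le> n0 + k * C" by simp
      then have "n div C \<le> (n0 + k * C) div C" by (rule div_le_mono)
      also have "\<dots> = h + k" unfolding h_def using Cpos by simp
      finally have u: "n div C \<le> h + k" .
      have l: "h \<le> n div C" unfolding h_def using n0le[OF nP] by (rule div_le_mono)
      have "n div C + 1 < h + B" using u Bdef by simp
      then show ?thesis using inS_near[OF B2 divS[OF n0P] divS[OF nP] l[unfolded h_def]]
        unfolding h_def by simp
    qed
    have GB: "n div C = h" if nP: "n \<in> P" and small: "m < 2 * X" for n
    proof (rule ccontr)
      assume "n div C \<noteq> h"
      then have nd: "n div C = h + 1" using GA[OF nP] by simp
      have "n = C * (n div C) + n mod C" by simp
      then have a: "n \<ge> C * h + C" using nd by (simp add: algebra_simps)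
      have "n0 = C * h + n0 mod C" unfolding h_def by simp
      then have b: "n0 < C * h + 2 * X" using modP[OF n0P] by linarith
      have "n < i + k*m" using nP unfolding P_def by simp
      also have "\<dots> \<le> n0 + k * m" using n0P unfolding P_def by simp
      finally have c: "n < n0 + k * m" .
      have d: "k * m \<le> k * (2 * X)" using small by simp
      have "C = 2 * k * X + 2 * X" using CX Bdef by (simp add: algebra_simps)
      then show False using a b c d by linarith
    qed
    define Dg where "Dg g = {j. j < k \<and> (\<exists>q<m. inS B (i + j*m + q) \<and> (i + j*m + q) div C = g)}" for g
    have finDg: "finite (Dg g)" for g unfolding Dg_def by (rule finite_subset[of _ "{..<k}"]) auto
    have diam: "j' * m < j * m + m + 2 * X" if jg: "j \<in> Dg g" "j' \<in> Dg g" for g j j'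
    proof -
      obtain q where q: "q < m" "inS B (i + j*m + q)" "(i + j*m + q) div C = g"
        using jg(1) unfolding Dg_def by blast
      obtain q' where q': "q' < m" "inS B (i + j'*m + q')" "(i + j'*m + q') div C = g"
        using jg(2) unfolding Dg_def by blast
      have jk: "j < k" "j' < k" using jg unfolding Dg_def by auto
      have pP: "i + j*m + q \<in> P" and pP': "i + j'*m + q' \<in> P" using inP jk q q' by auto
      have "i + j'*m + q' = C * g + (i + j'*m + q') mod C" using q'(3) by (metis div_mult_mod_eq mult.commute)
      also have "\<dots> < C * g + 2 * X" using modP[OF pP'] by simp
      also have "C * g \<le> i + j*m + q" using q(3) by (metis div_mult_mod_eq mult.commute le_add1)
      finally show ?thesis using q(1) by linarith
    qed
    have cardg3: "card (Dg g) \<le> 3" for g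
    proof (rule card_diam[OF finDg], intro ballI impI)
      fix a b assume ab: "a \<in> Dg g" "b \<in> Dg g" "a \<le> b"
      have "b * m < a * m + m + 2 * X" by (rule diam[OF ab(1,2)])
      also have "\<dots> \<le> (a + 3) * m" using e1 unfolding X_def by (simp add: algebra_simps)
      finally show "b < a + 3" by (simp add: mult_less_cancel2)
    qed
    have cardg2: "card (Dg g) \<le> 2" if big: "2 * X \<le> m" for g
    proof (rule card_diam[OF finDg], intro ballI impI)
      fix a b assume ab: "a \<in> Dg g" "b \<in> Dg g" "a \<le> b"
      have "b * m < a * m + m + 2 * X" by (rule diam[OF ab(1,2)])
      also have "\<dots> \<le> (a + 2) * m" using big by (simp add: algebra_simps)
      finally have "b * m < (a + 2) * m" .
      then show "b < a + 2" using mult_less_cancel2 by blast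
    qed
    have sub: "D \<subseteq> Dg h \<union> Dg (h+1)"
    proof
      fix j assume "j \<in> D"
      then obtain q where q: "j < k" "q < m" "inS B (i + j*m + q)" unfolding D_def by blast
      then have "i + j*m + q \<in> P" using inP by blast
      then have "(i + j*m + q) div C = h \<or> (i + j*m + q) div C = h + 1" by (rule GA)
      then show "j \<in> Dg h \<union> Dg (h+1)" using q unfolding Dg_def by blast
    qed
    show ?thesis
    proof (cases "2 * X \<le> m")
      case True
      have "card D \<le> card (Dg h \<union> Dg (h+1))" using sub by (intro card_mono) (auto intro: finDg)
      also have "\<dots> \<le> card (Dg h) + card (Dg (h+1))" by (rule card_Un_le)
      also have "\<dots> \<le> 4" using cardg2[OF True, of h] cardg2[OF True, of "h+1"] by simp
      finally show ?thesis .
    next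
      case False
      have "D \<subseteq> Dg h"
      proof
        fix j assume "j \<in> D"
        then obtain q where q: "j < k" "q < m" "inS B (i + j*m + q)" unfolding D_def by blast
        then have "i + j*m + q \<in> P" using inP by blast
        then have "(i + j*m + q) div C = h" using False GB by simp
        then show "j \<in> Dg h" using q unfolding Dg_def by blast
      qed
      then have "card D \<le> card (Dg h)" by (intro card_mono finDg)
      also have "\<dots> \<le> 3" by (rule cardg3)
      finally show ?thesis by simp
    qed
  qed
  then show ?thesis unfolding D_def .
qed



lemma len_concat: "\<forall>b\<in>set ws. length b = m \<Longrightarrow> length (concat ws) = length ws * m"
  by (induction ws) auto

lemma t_le_pow: assumes "(B::nat) \<ge> 2" shows "t \<le> B ^ t"
proof -
  have "t < 2 ^ t" by (rule less_exp)
  also have "\<dots> \<le> B ^ t" using assms by (rule power_mono) simp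
  finally show ?thesis by simp
qed

lemma unb_infinite: assumes "\<forall>m. \<exists>n\<ge>m. n \<in> (S::nat set)" shows "infinite S"
proof
  assume "finite S"
  then obtain b where b: "\<forall>n\<in>S. n \<le> b" using finite_nat_set_iff_bounded_le by blast
  obtain n where "n \<ge> Suc b" "n \<in> S" using assms by blast
  then show False using b by auto
qed

theorem theorem4p6:
  fixes k :: nat
  assumes "k \<ge> 6"
  shows "\<exists>x :: nat \<Rightarrow> nat. finite (range x) \<and> aperiodic x \<and> recurrent x \<and>
           avoids_anti_powers k (k - 5) x"
proof -
  define B where "B = 2*k+2"
  define x where "x = (\<lambda>n. if inS B n then 1 else (0::nat))"
  have B4: "B \<ge> 4" and B2: "B \<ge> 2" using assms unfolding B_def by simp_all
  have fin: "finite (range x)"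
    by (rule finite_subset[of _ "{0,1}"]) (auto simp: x_def)
  have aper: "aperiodic x"
    unfolding aperiodic_def eventually_periodic_def
  proof
    assume "\<exists>N u. u \<noteq> [] \<and> (\<forall>n. x (N + n) = u ! (n mod length u))"
    then obtain N u where u: "u \<noteq> []" and xu: "\<forall>n. x (N + n) = u ! (n mod length u)" by blast
    define L where "L = length u"
    have L0: "L > 0" using u unfolding L_def by simp
    have per: "x (N + n + c * L) = x (N + n)" for n c
      using xu[rule_format, of "n + c * L"] xu[rule_format, of n] unfolding L_def
      by (simp add: add.assoc)
    define t where "t = N + L"
    define a where "a = B ^ t"
    have at: "t \<le> a" unfolding a_def by (rule t_le_pow[OF B2])
    have aS: "inS B a" using inS_shift[OF B2, of 0 t] inS_0[of B] B2 unfolding a_def by simp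
    define c where "c = a div L + 1"
    have dm: "a = a div L * L + a mod L" by simp
    have ml: "a mod L < L" using L0 by simp
    have cL: "c * L = a div L * L + L" unfolding c_def by simp
    have c1: "a < c * L" using cL dm ml by linarith
    have c2: "c * L \<le> a + L" using cL dm by linarith
    have apos: "a > 0" unfolding a_def using B2 by simp
    have "\<not> inS B (a + c * L)"
    proof (rule inS_gap[OF B2])
      show "2 * B ^ t \<le> a + c * L" using c1 unfolding a_def by simp
      have "a + c * L \<le> 3 * a" using c2 at unfolding t_def by simp
      also have "\<dots> < B * a" using B4 apos by simp
      finally show "a + c * L < B ^ Suc t" unfolding a_def by simp
    qed
    moreover have "x (a + c * L) = x a"
      using per[of "a - N" c] at unfolding t_def by simp
    ultimately show False using aS unfolding x_def by simp
  qed
  have rec: "recurrent x"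
    unfolding recurrent_def is_factor_def
  proof (intro allI impI)
    fix w :: "nat list"
    assume "\<exists>i. factor_at x i (length w) = w"
    then obtain i where i: "factor_at x i (length w) = w" by blast
    show "infinite {j. factor_at x j (length w) = w}"
    proof (rule unb_infinite, rule allI)
      fix M
      define t where "t = M + i + length w"
      have tB: "t \<le> B ^ t" by (rule t_le_pow[OF B2])
      have "factor_at x (B ^ t + i) (length w) = factor_at x i (length w)"
        unfolding factor_at_def
      proof (rule nth_equalityI)
        fix q assume "q < length (map x [B ^ t + i..<B ^ t + i + length w])"
        then have q: "q < length w" by simp
        have "i + q < B ^ t" using q tB unfolding t_def by simp
        then have "x (B ^ t + (i + q)) = x (i + q)" unfolding x_def using inS_shift[OF B2] by simp
        then show "map x [B ^ t + i..<B ^ t + i + length w] ! q = map x [i..<i + length w] ! q"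
          using q by (simp add: add.assoc)
      qed simp
      then have f: "factor_at x (B ^ t + i) (length w) = w" using i by simp
      have Mle: "M \<le> B ^ t + i" using tB unfolding t_def by simp
      show "\<exists>j\<ge>M. j \<in> {j. factor_at x j (length w) = w}"
        by (rule exI[of _ "B ^ t + i"]) (simp add: f Mle)
    qed
  qed
  have av: "avoids_anti_powers k (k - 5) x"
    unfolding avoids_anti_powers_def is_factor_def
  proof (intro allI impI notI)
    fix w :: "nat list"
    assume "\<exists>i. factor_at x i (length w) = w"
    then obtain i where i: "factor_at x i (length w) = w" by blast
    assume "anti_power k (k - 5) w"
    then obtain ws m where ws: "length ws = k" "concat ws = w" "m \<ge> 1"
      "\<forall>b\<in>set ws. length b = m" "\<forall>j<k. card {i. i < k \<and> ws ! i = ws ! j} \<le> k - 5"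
      unfolding anti_power_def by blast
    have lw: "length w = k * m" using len_concat[OF ws(4)] ws(1,2) by simp
    have cw: "concat ws = map x [i..<i + length ws * m]"
      using i ws(1,2) lw unfolding factor_at_def by simp
    have bl: "ws ! j = map x [i+j*m..<i+j*m+m]" if "j < k" for j
      using blocks[OF ws(4) cw] that ws(1) by simp
    define Z where "Z = replicate m (0::nat)"
    define E where "E = {j. j < k \<and> ws ! j = Z}"
    define D where "D = {j. j < k \<and> (\<exists>q<m. inS B (i + j*m + q))}"
    have cD: "card D \<le> 4" unfolding D_def using core[of k m B i] assms ws(3) B_def by simp
    have sub: "{..<k} - E \<subseteq> D"
    proof
      fix j assume j: "j \<in> {..<k} - E"
      show "j \<in> D"
      proof (rule ccontr)
        assume "j \<notin> D"
        then have nq: "\<forall>q<m. \<not> inS B (i + j*m + q)" using j unfolding D_def by auto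
        have jk: "j < k" using j by simp
        have "map x [i+j*m..<i+j*m+m] = Z" unfolding Z_def
          by (intro nth_equalityI) (auto simp: x_def nq)
        then have "ws ! j = Z" using bl[OF jk] by simp
        then show False using j unfolding E_def by auto
      qed
    qed
    have finD: "finite D" unfolding D_def by (rule finite_subset[of _ "{..<k}"]) auto
    have "card ({..<k} - E) \<le> 4" using card_mono[OF finD sub] cD by simp
    moreover have "card ({..<k} - E) = k - card E"
      by (subst card_Diff_subset) (auto simp: E_def)
    ultimately have cE: "card E \<ge> k - 4" by simp
    then have "E \<noteq> {}" using assms by auto
    then obtain j0 where j0: "j0 \<in> E" by blast
    have "{i. i < k \<and> ws ! i = ws ! j0} = E" using j0 unfolding E_def by auto
    then have "card E \<le> k - 5" using ws(5) j0 unfolding E_def by fastforce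
    then show False using cE assms by simp
  qed
  show ?thesis using fin aper rec av by blast
qed

end
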